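(* Let $\Sigma$ be a smooth surface in $\mathbb{R}^3$ and let $\Gamma$ be a line of curvature on $\Sigma$ whose geodesic curvature on $\Sigma$ is a constant $c\neq 0$. If the torsion of $\Gamma$, regarded as a space curve in $\mathbb{R}^3$, is identically zero, then $\Gamma$ is a part of a circle, and $\Sigma$ is orthogonal to a sphere of radius $\frac{1}{|c|}$ along $\Gamma$.
   Context: A line of curvature on $\Sigma$ is a curve whose tangent vector is at every point a principal direction of $\Sigma$. *)

theory Defs
  imports "HOL-Analysis.Analysis"
begin

text \<open>C-infinity on an open set: the function is continuous and all first-order
  partial derivatives (directional derivatives along the standard basis) exist
  at every point of the set and are again C-infinity (coinductively, i.e. all
  partial derivatives of all orders exist and are continuous).\<close>
coinductive smooth_on :: "('a::euclidean_space) set \<Rightarrow> ('a \<Rightarrow> 'b::real_normed_vector) \<Rightarrow> bool" where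
  "continuous_on U f \<Longrightarrow>
   (\<forall>i\<in>Basis. \<exists>g. (\<forall>x\<in>U. ((\<lambda>s::real. f (x + s *\<^sub>R i)) has_vector_derivative g x) (at 0))
                    \<and> smooth_on U g)
   \<Longrightarrow> smooth_on U f"

definition regular_surface :: "(real^2 \<Rightarrow> real^3) \<Rightarrow> (real^2) set \<Rightarrow> bool" where
  "regular_surface X U \<longleftrightarrow> open U \<and> U \<noteq> {} \<and> smooth_on U X \<and> inj_on X U \<and>
     (\<forall>p\<in>U. inj (frechet_derivative X (at p)))"

definition unit_normal :: "(real^2 \<Rightarrow> real^3) \<Rightarrow> real^2 \<Rightarrow> real^3" where
  "unit_normal X p = (let Xu = frechet_derivative X (at p) (axis 1 1);
                          Xv = frechet_derivative X (at p) (axis 2 1)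
                      in (1 / norm (cross3 Xu Xv)) *\<^sub>R cross3 Xu Xv)"

text \<open>v is a principal direction of the surface at parameter p: v is a nonzero
  tangent vector, v = dX_p(w), which is an eigenvector of the shape operator
  S = - dN o (dX)^(-1), i.e. S(v) = - dN_p(w) = lambda v.\<close>
definition principal_direction :: "(real^2 \<Rightarrow> real^3) \<Rightarrow> real^2 \<Rightarrow> real^3 \<Rightarrow> bool" where
  "principal_direction X p v \<longleftrightarrow> v \<noteq> 0 \<and>
     (\<exists>w l. v = frechet_derivative X (at p) w \<and>
            - frechet_derivative (unit_normal X) (at p) w = l *\<^sub>R v)"

definition D1 :: "(real \<Rightarrow> real^3) \<Rightarrow> real \<Rightarrow> real^3" where
  "D1 \<gamma> t = vector_derivative \<gamma> (at t)"
definition D2 :: "(real \<Rightarrow> real^3) \<Rightarrow> real \<Rightarrow> real^3" where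
  "D2 \<gamma> t = vector_derivative (D1 \<gamma>) (at t)"
definition D3 :: "(real \<Rightarrow> real^3) \<Rightarrow> real \<Rightarrow> real^3" where
  "D3 \<gamma> t = vector_derivative (D2 \<gamma>) (at t)"

definition torsion :: "(real \<Rightarrow> real^3) \<Rightarrow> real \<Rightarrow> real" where
  "torsion \<gamma> t = (cross3 (D1 \<gamma> t) (D2 \<gamma> t) \<bullet> D3 \<gamma> t) / (norm (cross3 (D1 \<gamma> t) (D2 \<gamma> t)))^2"

definition geodesic_curvature :: "(real^2 \<Rightarrow> real^3) \<Rightarrow> (real \<Rightarrow> real^2) \<Rightarrow> real \<Rightarrow> real" where
  "geodesic_curvature X \<alpha> t =
     (let \<gamma> = X \<circ> \<alpha> in
       (D2 \<gamma> t \<bullet> cross3 (unit_normal X (\<alpha> t)) (D1 \<gamma> t)) / (norm (D1 \<gamma> t))^3)"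

definition line_of_curvature :: "(real^2 \<Rightarrow> real^3) \<Rightarrow> (real \<Rightarrow> real^2) \<Rightarrow> real set \<Rightarrow> bool" where
  "line_of_curvature X \<alpha> I \<longleftrightarrow> (\<forall>t\<in>I. principal_direction X (\<alpha> t) (D1 (X \<circ> \<alpha>) t))"

end

theory Submission
  imports Defs
begin


lemma smooth_onD:
  assumes "smooth_on U f"
  shows "continuous_on U f"
    "\<And>i. i \<in> Basis \<Longrightarrow> \<exists>g. (\<forall>x\<in>U. ((\<lambda>s::real. f (x + s *\<^sub>R i)) has_vector_derivative g x) (at 0)) \<and> smooth_on U g"
  using assms by (auto elim: smooth_on.cases)

definition pd :: "('a::euclidean_space) set \<Rightarrow> ('a \<Rightarrow> 'b::real_normed_vector) \<Rightarrow> 'a \<Rightarrow> 'a \<Rightarrow> 'b" where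
  "pd U f i = (SOME g. (\<forall>x\<in>U. ((\<lambda>s::real. f (x + s *\<^sub>R i)) has_vector_derivative g x) (at 0)) \<and> smooth_on U g)"

lemma pd:
  assumes "smooth_on U f" "i \<in> Basis"
  shows "\<And>x. x\<in>U \<Longrightarrow> ((\<lambda>s::real. f (x + s *\<^sub>R i)) has_vector_derivative pd U f i x) (at 0)"
    "smooth_on U (pd U f i)"
proof -
  have "\<exists>g. (\<forall>x\<in>U. ((\<lambda>s::real. f (x + s *\<^sub>R i)) has_vector_derivative g x) (at 0)) \<and> smooth_on U g"
    using smooth_onD(2)[OF assms] .
  from someI_ex[OF this] show "\<And>x. x\<in>U \<Longrightarrow> ((\<lambda>s::real. f (x + s *\<^sub>R i)) has_vector_derivative pd U f i x) (at 0)"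
    "smooth_on U (pd U f i)" unfolding pd_def by auto
qed

lemma shift_vd:
  fixes f :: "real \<Rightarrow> 'b::real_normed_vector"
  assumes "((\<lambda>s. f (x + s)) has_vector_derivative v) (at 0)"
  shows "(f has_vector_derivative v) (at x)"
proof -
  have d1: "((\<lambda>u. u - x) has_vector_derivative 1) (at x)"
    by (auto intro!: derivative_eq_intros)
  have "(((\<lambda>s. f (x + s)) \<circ> (\<lambda>u. u - x)) has_vector_derivative (1 *\<^sub>R v)) (at x)"
    by (rule vector_diff_chain_at[OF d1]) (simp add: assms)
  then show ?thesis by (simp add: o_def)
qed

lemma smooth_real_deriv:
  fixes f :: "real \<Rightarrow> 'b::real_normed_vector"
  assumes "smooth_on I f" "x \<in> I"
  shows "(f has_vector_derivative pd I f 1 x) (at x)" "smooth_on I (pd I f 1)"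
  using pd[OF assms(1), of 1] assms(2) shift_vd by auto



lemma decomp2: "x + (z - x)$1 *\<^sub>R axis 1 1 + (z - x)$2 *\<^sub>R axis 2 1 = (z::real^2)"
  by (simp add: vec_eq_iff forall_2 axis_def)

lemma norm_decomp2: "norm (s *\<^sub>R axis 1 1 + t *\<^sub>R axis 2 (1::real) :: real^2) \<le> \<bar>s\<bar> + \<bar>t\<bar>"
  by (rule order_trans[OF norm_triangle_ineq]) simp

lemma partials2:
  fixes f :: "real^2 \<Rightarrow> 'b::real_normed_vector"
  assumes sm: "smooth_on U f" and U: "open U" and xU: "x \<in> U"
  shows "(f has_derivative (\<lambda>h. h$1 *\<^sub>R pd U f (axis 1 1) x + h$2 *\<^sub>R pd U f (axis 2 1) x)) (at x)"
proof -
  define e1 :: "real^2" where "e1 = axis 1 1"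
  define e2 :: "real^2" where "e2 = axis 2 1"
  have b1: "e1 \<in> Basis" and b2: "e2 \<in> Basis" unfolding e1_def e2_def by auto
  define g1 where "g1 = pd U f e1"
  define g2 where "g2 = pd U f e2"
  have g1: "\<And>z. z \<in> U \<Longrightarrow> ((\<lambda>s. f (z + s *\<^sub>R e1)) has_vector_derivative g1 z) (at 0)"
    using pd(1)[OF sm b1] g1_def by auto
  have g2: "\<And>z. z \<in> U \<Longrightarrow> ((\<lambda>s. f (z + s *\<^sub>R e2)) has_vector_derivative g2 z) (at 0)"
    using pd(1)[OF sm b2] g2_def by auto
  have g2c: "continuous_on U g2" using smooth_onD(1)[OF pd(2)[OF sm b2]] g2_def by simp
  obtain r where r: "r > 0" "ball x r \<subseteq> U" using U xU open_contains_ball by blast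
  define X :: "real set" where "X = {-r/2<..<r/2}"
  define F where "F = (\<lambda>s t. f (x + s *\<^sub>R e1 + t *\<^sub>R e2))"
  have inU: "x + s *\<^sub>R e1 + t *\<^sub>R e2 \<in> U" if "s \<in> X" "t \<in> X" for s t
  proof -
    have "norm (s *\<^sub>R e1 + t *\<^sub>R e2) < r"
      using norm_decomp2[of s t] that unfolding X_def e1_def e2_def by auto
    then have "x + s *\<^sub>R e1 + t *\<^sub>R e2 \<in> ball x r"
      by (metis add.assoc add_diff_cancel_left' dist_commute dist_norm mem_ball)
    then show ?thesis using r by blast
  qed
  have X0: "0 \<in> X" using r by (simp add: X_def)
  have fx: "((\<lambda>s. F s 0) has_derivative (\<lambda>s. s *\<^sub>R g1 x)) (at 0 within X)"
    using g1[OF xU] unfolding F_def has_vector_derivative_def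
    by (auto intro: has_derivative_at_withinI)
  have fy: "((\<lambda>t. F s t) has_derivative blinfun_apply (blinfun_scaleR_left (g2 (x + s *\<^sub>R e1 + t *\<^sub>R e2)))) (at t within X)"
    if "s \<in> X" "t \<in> X" for s t
  proof -
    let ?z = "x + s *\<^sub>R e1 + t *\<^sub>R e2"
    have "((\<lambda>u. f (?z + u *\<^sub>R e2)) has_vector_derivative g2 ?z) (at 0)"
      using g2[OF inU[OF that]] .
    moreover have "(\<lambda>u. F s (t + u)) = (\<lambda>u. f (?z + u *\<^sub>R e2))"
      by (simp add: F_def algebra_simps)
    ultimately have "((\<lambda>t. F s t) has_vector_derivative g2 ?z) (at t)"
      using shift_vd[of "F s" t] by simp
    then show ?thesis unfolding has_vector_derivative_def
      by (auto intro: has_derivative_at_withinI)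
  qed
  have cont: "continuous (at (0, 0) within X \<times> X) (\<lambda>(s, t). blinfun_scaleR_left (g2 (x + s *\<^sub>R e1 + t *\<^sub>R e2)))"
  proof -
    have c1: "continuous (at (0::real, 0::real)) (\<lambda>(s, t). x + s *\<^sub>R e1 + t *\<^sub>R e2)"
      unfolding split_beta by (intro continuous_intros)
    have c2: "continuous (at x) g2" using g2c U xU continuous_on_eq_continuous_at by blast
    have c3: "continuous (at y) blinfun_scaleR_left" for y :: 'b
      by (simp add: bounded_linear_blinfun_scaleR_left linear_continuous_at)
    have c4: "continuous (at (0::real, 0::real)) (g2 \<circ> (\<lambda>(s, t). x + s *\<^sub>R e1 + t *\<^sub>R e2))"
      using continuous_at_compose[OF c1, of g2] c2 by simp
    have "continuous (at (0::real, 0::real)) (blinfun_scaleR_left \<circ> (g2 \<circ> (\<lambda>(s, t). x + s *\<^sub>R e1 + t *\<^sub>R e2)))"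
      by (rule continuous_at_compose[OF c4 c3])
    then show ?thesis
      unfolding split_beta o_def by (rule continuous_at_imp_continuous_at_within)
  qed
  have "((\<lambda>(s, t). F s t) has_derivative (\<lambda>(ts, tt). ts *\<^sub>R g1 x + blinfun_apply (blinfun_scaleR_left (g2 (x + 0 *\<^sub>R e1 + 0 *\<^sub>R e2))) tt)) (at (0, 0) within X \<times> X)"
    by (rule has_derivative_partialsI[OF fx fy cont X0]) (auto simp: X_def)
  then have D: "((\<lambda>(s, t). F s t) has_derivative (\<lambda>(ts, tt). ts *\<^sub>R g1 x + tt *\<^sub>R g2 x)) (at (0, 0))"
    using at_within_open[of "(0,0)" "X \<times> X"] X0 by (simp add: X_def open_Times)
  define L where "L = (\<lambda>z::real^2. ((z - x)$1, (z - x)$2))"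
  have DL: "(L has_derivative (\<lambda>h. (h$1, h$2))) (at x)"
    unfolding L_def
    by (auto intro!: derivative_eq_intros bounded_linear.has_derivative[OF bounded_linear_vec_nth])
  have "(((\<lambda>(s, t). F s t) \<circ> L) has_derivative ((\<lambda>(ts, tt). ts *\<^sub>R g1 x + tt *\<^sub>R g2 x) \<circ> (\<lambda>h. (h$1, h$2)))) (at x)"
    by (rule diff_chain_at[OF DL]) (simp add: L_def D)
  moreover have "(\<lambda>(s, t). F s t) \<circ> L = f"
    using decomp2[of x] by (auto simp: L_def F_def e1_def e2_def o_def)
  ultimately show ?thesis by (simp add: o_def g1_def g2_def e1_def e2_def)
qed



lemma bb_cross: "bounded_bilinear (cross3 :: real^3 \<Rightarrow> real^3 \<Rightarrow> real^3)"
  using bilinear_conv_bounded_bilinear bilinear_cross by blast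

lemma differentiable_cross:
  fixes f g :: "'a::real_normed_vector \<Rightarrow> real^3"
  assumes "f differentiable (at x within s)" "g differentiable (at x within s)"
  shows "(\<lambda>x. cross3 (f x) (g x)) differentiable (at x within s)"
  using assms unfolding differentiable_def
  by (blast intro: bounded_bilinear.FDERIV[OF bb_cross])

lemma vd_cross:
  fixes f g :: "real \<Rightarrow> real^3"
  assumes "(f has_vector_derivative f') (at x)" "(g has_vector_derivative g') (at x)"
  shows "((\<lambda>x. cross3 (f x) (g x)) has_vector_derivative (cross3 (f x) g' + cross3 f' (g x))) (at x)"
  by (rule bounded_bilinear.has_vector_derivative[OF bb_cross assms])

lemma vd_inner:
  fixes f g :: "real \<Rightarrow> real^3"
  assumes "(f has_vector_derivative f') (at x)" "(g has_vector_derivative g') (at x)"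
  shows "((\<lambda>x. f x \<bullet> g x) has_vector_derivative (f x \<bullet> g' + f' \<bullet> g x)) (at x)"
  by (rule bounded_bilinear.has_vector_derivative[OF bounded_bilinear_inner assms])

lemma vd_norm:
  fixes V :: "real \<Rightarrow> real^3"
  assumes d: "(V has_vector_derivative V') (at t)" and nz: "V t \<noteq> 0"
  shows "((\<lambda>t. norm (V t)) has_field_derivative ((V t \<bullet> V') / norm (V t))) (at t)"
proof -
  have "((\<lambda>t. norm (V t)) has_derivative (\<lambda>h. (h *\<^sub>R V') \<bullet> sgn (V t))) (at t)"
    using has_derivative_compose[OF d[unfolded has_vector_derivative_def] has_derivative_norm[OF nz]] .
  moreover have "(\<lambda>h. (h *\<^sub>R V') \<bullet> sgn (V t)) = (*) ((V t \<bullet> V') / norm (V t))"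
    by (auto simp: sgn_div_norm inner_commute divide_inverse)
  ultimately show ?thesis by (simp add: has_field_derivative_def)
qed

lemma vd_normalize:
  fixes V :: "real \<Rightarrow> real^3"
  assumes d: "(V has_vector_derivative V') (at t)" and nz: "V t \<noteq> 0"
  shows "((\<lambda>t. (1 / norm (V t)) *\<^sub>R V t) has_vector_derivative
          ((1 / norm (V t)) *\<^sub>R V' - ((V t \<bullet> V') / norm (V t) ^ 3) *\<^sub>R V t)) (at t)"
proof -
  have n: "((\<lambda>t. norm (V t)) has_field_derivative ((V t \<bullet> V') / norm (V t))) (at t)"
    by (rule vd_norm[OF d nz])
  have nz': "norm (V t) \<noteq> 0" using nz by simp
  have i0: "((\<lambda>t. inverse (norm (V t))) has_field_derivative
      (- ((V t \<bullet> V') / norm (V t) * inverse (norm (V t) ^ Suc (Suc 0))))) (at t)"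
    by (rule DERIV_inverse_fun[OF n nz'])
  have eq: "- ((V t \<bullet> V') / norm (V t) * inverse (norm (V t) ^ Suc (Suc 0))) = - ((V t \<bullet> V') / norm (V t) ^ 3)"
    by (simp add: divide_inverse power3_eq_cube inverse_mult_distrib mult.assoc)
  have i: "((\<lambda>t. 1 / norm (V t)) has_field_derivative (- ((V t \<bullet> V') / norm (V t) ^ 3))) (at t)"
    using i0 unfolding eq by (simp add: inverse_eq_divide)
  show ?thesis
    using has_vector_derivative_scaleR[OF i d] by (simp add: algebra_simps)
qed

lemma chain2:
  fixes F :: "real^2 \<Rightarrow> 'b::real_normed_vector"
  assumes sm: "smooth_on U F" and U: "open U" and inU: "\<alpha> t \<in> U"
    and d: "(\<alpha> has_vector_derivative a1) (at t)"
  shows "((\<lambda>t. F (\<alpha> t)) has_vector_derivative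
           (a1$1 *\<^sub>R pd U F (axis 1 1) (\<alpha> t) + a1$2 *\<^sub>R pd U F (axis 2 1) (\<alpha> t))) (at t)"
proof -
  have "((F \<circ> \<alpha>) has_derivative
      ((\<lambda>h. h$1 *\<^sub>R pd U F (axis 1 1) (\<alpha> t) + h$2 *\<^sub>R pd U F (axis 2 1) (\<alpha> t)) \<circ> (\<lambda>s. s *\<^sub>R a1))) (at t)"
    by (rule diff_chain_at[OF d[unfolded has_vector_derivative_def] partials2[OF sm U inU]])
  then show ?thesis
    by (simp add: has_vector_derivative_def o_def scaleR_add_right)
qed

lemma frechet2:
  fixes F :: "real^2 \<Rightarrow> 'b::real_normed_vector"
  assumes sm: "smooth_on U F" and U: "open U" and inU: "p \<in> U"
  shows "frechet_derivative F (at p) = (\<lambda>h. h$1 *\<^sub>R pd U F (axis 1 1) p + h$2 *\<^sub>R pd U F (axis 2 1) p)"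
  using frechet_derivative_at[OF partials2[OF sm U inU]] by simp

lemma vd_nth:
  fixes f :: "real \<Rightarrow> real^'n"
  assumes "(f has_vector_derivative f') (at t)"
  shows "((\<lambda>t. f t $ i) has_field_derivative (f' $ i)) (at t)"
  using bounded_linear.has_vector_derivative[OF bounded_linear_vec_nth assms, of i]
  by (simp add: has_real_derivative_iff_has_vector_derivative)



lemma cross_cross_expand: "cross3 x (cross3 y z) = (x \<bullet> z) *\<^sub>R y - (x \<bullet> y) *\<^sub>R z"
  for x y z :: "real^3"
  by (simp add: cross3_simps forall_3)

locale LC =
  fixes X :: "real^2 \<Rightarrow> real^3" and U :: "(real^2) set"
    and \<alpha> :: "real \<Rightarrow> real^2" and a b c :: real
  assumes surf: "regular_surface X U"
    and ab: "a < b"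
    and curve_smooth: "smooth_on {a<..<b} \<alpha>"
    and curve_in: "\<alpha> ` {a<..<b} \<subseteq> U"
    and regular: "\<forall>t\<in>{a<..<b}. D1 (X \<circ> \<alpha>) t \<noteq> 0"
    and loc: "line_of_curvature X \<alpha> {a<..<b}"
    and kg: "\<forall>t\<in>{a<..<b}. geodesic_curvature X \<alpha> t = c"
    and c0: "c \<noteq> 0"
    and tors: "\<forall>t\<in>{a<..<b}. torsion (X \<circ> \<alpha>) t = 0"
begin

abbreviation "I \<equiv> {a<..<b}"
abbreviation "e1 \<equiv> axis 1 1 :: real^2"
abbreviation "e2 \<equiv> axis 2 1 :: real^2"
abbreviation "\<alpha>1 \<equiv> pd I \<alpha> 1"
abbreviation "\<alpha>2 \<equiv> pd I \<alpha>1 1"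
abbreviation "\<alpha>3 \<equiv> pd I \<alpha>2 1"
abbreviation "X1 \<equiv> pd U X e1"
abbreviation "X2 \<equiv> pd U X e2"
abbreviation "X11 \<equiv> pd U X1 e1"
abbreviation "X12 \<equiv> pd U X1 e2"
abbreviation "X21 \<equiv> pd U X2 e1"
abbreviation "X22 \<equiv> pd U X2 e2"

lemma oU: "open U" and smX: "smooth_on U X"
  and injD: "p \<in> U \<Longrightarrow> inj (frechet_derivative X (at p))"
  using surf unfolding regular_surface_def by auto

lemma oI: "open I" by simp

lemma inU: "t \<in> I \<Longrightarrow> \<alpha> t \<in> U" using curve_in by auto

lemma sm_a: "smooth_on I \<alpha>1" "smooth_on I \<alpha>2"
  using pd(2)[OF curve_smooth, of 1] pd(2)[OF pd(2)[OF curve_smooth, of 1], of 1] by auto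

lemma da: assumes "t \<in> I"
  shows "(\<alpha> has_vector_derivative \<alpha>1 t) (at t)" "(\<alpha>1 has_vector_derivative \<alpha>2 t) (at t)"
    "(\<alpha>2 has_vector_derivative \<alpha>3 t) (at t)"
  using smooth_real_deriv(1)[OF curve_smooth assms] smooth_real_deriv(1)[OF sm_a(1) assms]
    smooth_real_deriv(1)[OF sm_a(2) assms] by auto

lemma b12: "e1 \<in> Basis" "e2 \<in> Basis" by auto

lemma smXs: "smooth_on U X1" "smooth_on U X2" "smooth_on U X11" "smooth_on U X12"
  "smooth_on U X21" "smooth_on U X22"
  using pd(2)[OF smX b12(1)] pd(2)[OF smX b12(2)] pd(2)[OF pd(2)[OF smX b12(1)] b12(1)]
    pd(2)[OF pd(2)[OF smX b12(1)] b12(2)] pd(2)[OF pd(2)[OF smX b12(2)] b12(1)]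
    pd(2)[OF pd(2)[OF smX b12(2)] b12(2)] by auto

definition "G1 t = (\<alpha>1 t)$1 *\<^sub>R X1 (\<alpha> t) + (\<alpha>1 t)$2 *\<^sub>R X2 (\<alpha> t)"
definition "G2 t = (\<alpha>2 t)$1 *\<^sub>R X1 (\<alpha> t) + (\<alpha>1 t)$1 *\<^sub>R ((\<alpha>1 t)$1 *\<^sub>R X11 (\<alpha> t) + (\<alpha>1 t)$2 *\<^sub>R X12 (\<alpha> t))
   + ((\<alpha>2 t)$2 *\<^sub>R X2 (\<alpha> t) + (\<alpha>1 t)$2 *\<^sub>R ((\<alpha>1 t)$1 *\<^sub>R X21 (\<alpha> t) + (\<alpha>1 t)$2 *\<^sub>R X22 (\<alpha> t)))"

lemma dG0: "t \<in> I \<Longrightarrow> ((X \<circ> \<alpha>) has_vector_derivative G1 t) (at t)"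
  using chain2[OF smX oU inU da(1)] unfolding G1_def o_def by auto

lemma dG1: assumes t: "t \<in> I" shows "(G1 has_vector_derivative G2 t) (at t)"
proof -
  have c1: "((\<lambda>t. X1 (\<alpha> t)) has_vector_derivative ((\<alpha>1 t)$1 *\<^sub>R X11 (\<alpha> t) + (\<alpha>1 t)$2 *\<^sub>R X12 (\<alpha> t))) (at t)"
    by (rule chain2[OF smXs(1) oU inU[OF t] da(1)[OF t]])
  have c2: "((\<lambda>t. X2 (\<alpha> t)) has_vector_derivative ((\<alpha>1 t)$1 *\<^sub>R X21 (\<alpha> t) + (\<alpha>1 t)$2 *\<^sub>R X22 (\<alpha> t))) (at t)"
    by (rule chain2[OF smXs(2) oU inU[OF t] da(1)[OF t]])
  have n1: "((\<lambda>t. \<alpha>1 t $ i) has_field_derivative (\<alpha>2 t $ i)) (at t)" for i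
    by (rule vd_nth[OF da(2)[OF t]])
  show ?thesis
    unfolding G1_def G2_def
    by (rule has_vector_derivative_eq_rhs[OF has_vector_derivative_add[OF has_vector_derivative_scaleR[OF n1 c1] has_vector_derivative_scaleR[OF n1 c2]]])
      (simp add: algebra_simps)
qed

lemma diffG2: assumes t: "t \<in> I" shows "G2 differentiable (at t)"
proof -
  have dX: "(\<lambda>t. F (\<alpha> t)) differentiable (at t)" if "smooth_on U F" for F :: "real^2 \<Rightarrow> real^3"
    using chain2[OF that oU inU[OF t] da(1)[OF t]] by (rule differentiableI_vector)
  have n1: "(\<lambda>t. \<alpha>1 t $ i) differentiable (at t)" for i
  proof -
    have "((\<lambda>t. \<alpha>1 t $ i) has_vector_derivative \<alpha>2 t $ i) (at t)"
      using vd_nth[OF da(2)[OF t]] by (simp add: has_real_derivative_iff_has_vector_derivative)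
    then show ?thesis by (rule differentiableI_vector)
  qed
  have n2: "(\<lambda>t. \<alpha>2 t $ i) differentiable (at t)" for i
  proof -
    have "((\<lambda>t. \<alpha>2 t $ i) has_vector_derivative \<alpha>3 t $ i) (at t)"
      using vd_nth[OF da(3)[OF t]] by (simp add: has_real_derivative_iff_has_vector_derivative)
    then show ?thesis by (rule differentiableI_vector)
  qed
  show ?thesis unfolding G2_def
    by (intro differentiable_add differentiable_scaleR n1 n2 dX smXs smX)
qed

abbreviation "\<gamma> \<equiv> X \<circ> \<alpha>"

lemma D1eq: "t \<in> I \<Longrightarrow> D1 \<gamma> t = G1 t"
  unfolding D1_def using dG0 vector_derivative_at by blast

lemma hD2: assumes t: "t \<in> I" shows "(D1 \<gamma> has_vector_derivative G2 t) (at t)"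
  by (rule has_vector_derivative_transform_within_open[OF dG1[OF t] oI t]) (simp add: D1eq)

lemma D2eq: "t \<in> I \<Longrightarrow> D2 \<gamma> t = G2 t"
  unfolding D2_def using hD2 vector_derivative_at by blast

lemma hg: "t \<in> I \<Longrightarrow> (\<gamma> has_vector_derivative D1 \<gamma> t) (at t)"
  using dG0 D1eq by simp

lemma hT: "t \<in> I \<Longrightarrow> (D1 \<gamma> has_vector_derivative D2 \<gamma> t) (at t)"
  using hD2 D2eq by simp

lemma hA: assumes t: "t \<in> I" shows "(D2 \<gamma> has_vector_derivative D3 \<gamma> t) (at t)"
proof -
  have "(G2 has_vector_derivative vector_derivative G2 (at t)) (at t)"
    using diffG2[OF t] vector_derivative_works by blast
  then have "(D2 \<gamma> has_vector_derivative vector_derivative G2 (at t)) (at t)"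
    by (rule has_vector_derivative_transform_within_open[OF _ oI t]) (simp add: D2eq)
  then show ?thesis unfolding D3_def[of \<gamma> t] using vector_derivative_at by metis
qed

end


context LC begin

definition "Nf p = (1 / norm (cross3 (X1 p) (X2 p))) *\<^sub>R cross3 (X1 p) (X2 p)"

lemma dXp: "p \<in> U \<Longrightarrow> frechet_derivative X (at p) = (\<lambda>h. h$1 *\<^sub>R X1 p + h$2 *\<^sub>R X2 p)"
  by (rule frechet2[OF smX oU])

lemma un: "p \<in> U \<Longrightarrow> unit_normal X p = Nf p"
  unfolding unit_normal_def Let_def Nf_def by (simp add: dXp axis_def)

lemma crossnz: assumes p: "p \<in> U" shows "cross3 (X1 p) (X2 p) \<noteq> 0"
proof
  assume z: "cross3 (X1 p) (X2 p) = 0"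
  let ?L = "frechet_derivative X (at p)"
  have inj: "inj ?L" using injD[OF p] .
  have L0: "?L 0 = 0" by (simp add: dXp[OF p])
  define h where "h = (X2 p \<bullet> X2 p) *\<^sub>R e1 - (X1 p \<bullet> X2 p) *\<^sub>R e2"
  have "cross3 (X2 p) (cross3 (X1 p) (X2 p)) = (X2 p \<bullet> X2 p) *\<^sub>R X1 p - (X2 p \<bullet> X1 p) *\<^sub>R X2 p"
    by (rule cross_cross_expand)
  then have "?L h = 0" using z by (simp add: dXp[OF p] h_def axis_def inner_commute)
  then have "h = 0" using inj L0 by (metis inj_eq)
  then have "X2 p \<bullet> X2 p = 0" unfolding h_def by (simp add: vec_eq_iff forall_2 axis_def)
  then have "X2 p = 0" by simp
  then have "?L e2 = 0" by (simp add: dXp[OF p] axis_def)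
  then have "e2 = 0" using inj L0 by (metis inj_eq)
  then show False by (metis axis_eq_0_iff zero_neq_one)
qed

lemma Nf_diff: assumes p: "p \<in> U" shows "Nf differentiable (at p)"
proof -
  have d1: "X1 differentiable (at p)" "X2 differentiable (at p)"
    using partials2[OF smXs(1) oU p] partials2[OF smXs(2) oU p] by (auto intro: differentiableI)
  have dc: "(\<lambda>p. cross3 (X1 p) (X2 p)) differentiable (at p)"
    by (rule differentiable_cross[OF d1])
  have dn: "(\<lambda>p. norm (cross3 (X1 p) (X2 p))) differentiable (at p)"
    by (rule differentiable_compose[OF differentiable_norm_at[OF crossnz[OF p]] dc])
  have "(\<lambda>p. 1 / norm (cross3 (X1 p) (X2 p))) differentiable (at p)"
    by (rule differentiable_divide[OF differentiable_const dn]) (use crossnz[OF p] in simp)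
  then show ?thesis unfolding Nf_def[abs_def] by (intro differentiable_scaleR dc)
qed

lemma dN_eq: assumes p: "p \<in> U"
  shows "frechet_derivative (unit_normal X) (at p) = frechet_derivative Nf (at p)"
proof -
  have "(Nf has_derivative frechet_derivative Nf (at p)) (at p)"
    using Nf_diff[OF p] frechet_derivative_works by blast
  then have "(unit_normal X has_derivative frechet_derivative Nf (at p)) (at p)"
    by (rule has_derivative_transform_within_open[OF _ oU p]) (simp add: un)
  then show ?thesis using frechet_derivative_at by metis
qed

abbreviation "N \<equiv> \<lambda>t. unit_normal X (\<alpha> t)"

lemma hN: assumes t: "t \<in> I"
  shows "(N has_vector_derivative frechet_derivative (unit_normal X) (at (\<alpha> t)) (\<alpha>1 t)) (at t)"
proof -
  let ?D = "frechet_derivative Nf (at (\<alpha> t))"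
  have dN: "(Nf has_derivative ?D) (at (\<alpha> t))"
    using Nf_diff[OF inU[OF t]] frechet_derivative_works by blast
  have lin: "linear ?D" using has_derivative_linear[OF dN] .
  have "((Nf \<circ> \<alpha>) has_derivative (?D \<circ> (\<lambda>s. s *\<^sub>R \<alpha>1 t))) (at t)"
    by (rule diff_chain_at[OF da(1)[OF t, unfolded has_vector_derivative_def] dN])
  then have "((Nf \<circ> \<alpha>) has_vector_derivative ?D (\<alpha>1 t)) (at t)"
    unfolding has_vector_derivative_def o_def using linear_cmul[OF lin] by simp
  then have "(N has_vector_derivative ?D (\<alpha>1 t)) (at t)"
    by (rule has_vector_derivative_transform_within_open[OF _ oI t]) (simp add: un inU)
  then show ?thesis using dN_eq[OF inU[OF t]] by simp
qed

lemma T_eq: "t \<in> I \<Longrightarrow> D1 \<gamma> t = frechet_derivative X (at (\<alpha> t)) (\<alpha>1 t)"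
  by (simp add: D1eq G1_def dXp inU)

lemma NT: assumes t: "t \<in> I" shows "N t \<bullet> D1 \<gamma> t = 0"
  using t by (simp add: D1eq G1_def un inU Nf_def inner_add_right dot_cross_self)

lemma Nunit: assumes t: "t \<in> I" shows "norm (N t) = 1"
  using crossnz[OF inU[OF t]] un[OF inU[OF t]] by (simp add: Nf_def)

lemma N'eq: assumes t: "t \<in> I"
  obtains l where "frechet_derivative (unit_normal X) (at (\<alpha> t)) (\<alpha>1 t) = - (l *\<^sub>R D1 \<gamma> t)"
proof -
  have "principal_direction X (\<alpha> t) (D1 \<gamma> t)" using loc t unfolding line_of_curvature_def by auto
  then obtain w l where w: "D1 \<gamma> t = frechet_derivative X (at (\<alpha> t)) w"
    and l: "- frechet_derivative (unit_normal X) (at (\<alpha> t)) w = l *\<^sub>R D1 \<gamma> t"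
    unfolding principal_direction_def by blast
  have "w = \<alpha>1 t" using w T_eq[OF t] injD[OF inU[OF t]] by (metis inj_eq)
  then show ?thesis using l that[of l] by (metis minus_minus)
qed

end


lemma triple_cyc: "a \<bullet> cross3 n t = n \<bullet> cross3 t a" for a n t :: "real^3"
  by (simp add: cross3_simps)

lemma binet: "cross3 a b \<bullet> cross3 c d = (a \<bullet> c) * (b \<bullet> d) - (a \<bullet> d) * (b \<bullet> c)" for a b c d :: "real^3"
  by (simp add: cross3_simps)

lemma idP: "(T \<bullet> T) *\<^sub>R cross3 N A = (A \<bullet> T) *\<^sub>R cross3 N T + (N \<bullet> T) *\<^sub>R cross3 T A - (A \<bullet> cross3 N T) *\<^sub>R T"
  for T N A :: "real^3"
  by (simp add: cross3_simps forall_3)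

lemma idQ: "(cross3 T A \<bullet> cross3 T A) *\<^sub>R cross3 T J - (cross3 T A \<bullet> cross3 T J) *\<^sub>R cross3 T A
   = (cross3 T A \<bullet> J) *\<^sub>R cross3 T (cross3 T A)"
  for T A J :: "real^3"
  by (simp add: cross3_simps forall_3)



context LC begin

abbreviation "T \<equiv> D1 \<gamma>"
abbreviation "A \<equiv> D2 \<gamma>"
abbreviation "J \<equiv> D3 \<gamma>"

lemma Tnz: "t \<in> I \<Longrightarrow> T t \<noteq> 0" using regular by auto

lemma hN2: assumes t: "t \<in> I" obtains l where "(N has_vector_derivative - (l *\<^sub>R T t)) (at t)"
  using hN[OF t] N'eq[OF t] by metis

lemma kgeq: assumes t: "t \<in> I" shows "A t \<bullet> cross3 (N t) (T t) = c * norm (T t) ^ 3"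
proof -
  have "(A t \<bullet> cross3 (N t) (T t)) / norm (T t) ^ 3 = c"
    using kg t unfolding geodesic_curvature_def Let_def by auto
  moreover have "norm (T t) ^ 3 \<noteq> 0" using Tnz[OF t] by simp
  ultimately show ?thesis by (simp add: field_simps)
qed

lemma normNT: assumes t: "t \<in> I" shows "norm (cross3 (N t) (T t)) = norm (T t)"
proof -
  have "(norm (cross3 (N t) (T t)))\<^sup>2 + (N t \<bullet> T t)\<^sup>2 = (norm (N t) * norm (T t))\<^sup>2"
    by (rule norm_cross_dot)
  then have "(norm (cross3 (N t) (T t)))\<^sup>2 = (norm (T t))\<^sup>2" using NT[OF t] Nunit[OF t] by simp
  then show ?thesis by (simp add: power2_eq_iff_nonneg)
qed

lemma TAnz: assumes t: "t \<in> I" shows "cross3 (T t) (A t) \<noteq> 0"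
proof
  assume z: "cross3 (T t) (A t) = 0"
  have "A t \<bullet> cross3 (N t) (T t) = N t \<bullet> cross3 (T t) (A t)" by (rule triple_cyc)
  then have "c * norm (T t) ^ 3 = 0" using z kgeq[OF t] by simp
  then show False using c0 Tnz[OF t] by simp
qed

lemma torsJ: assumes t: "t \<in> I" shows "cross3 (T t) (A t) \<bullet> J t = 0"
proof -
  have "(cross3 (T t) (A t) \<bullet> J t) / (norm (cross3 (T t) (A t)))^2 = 0"
    using tors t unfolding torsion_def by auto
  then show ?thesis using TAnz[OF t] by simp
qed

definition "M t = \<gamma> t + (1 / c) *\<^sub>R ((1 / norm (cross3 (N t) (T t))) *\<^sub>R cross3 (N t) (T t))"

lemma hM: assumes t: "t \<in> I" shows "(M has_vector_derivative 0) (at t)"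
proof -
  obtain l where hn: "(N has_vector_derivative - (l *\<^sub>R T t)) (at t)" using hN2[OF t] .
  let ?V = "cross3 (N t) (T t)"
  have hV: "((\<lambda>t. cross3 (N t) (T t)) has_vector_derivative cross3 (N t) (A t)) (at t)"
    using vd_cross[OF hn hT[OF t]] by (simp add: cross_mult_left)
  have Vnz: "?V \<noteq> 0" using normNT[OF t] Tnz[OF t] by (metis norm_eq_zero)
  have hW: "((\<lambda>t. (1 / norm (cross3 (N t) (T t))) *\<^sub>R cross3 (N t) (T t)) has_vector_derivative
     ((1 / norm ?V) *\<^sub>R cross3 (N t) (A t) - ((?V \<bullet> cross3 (N t) (A t)) / norm ?V ^ 3) *\<^sub>R ?V)) (at t)"
    by (rule vd_normalize[OF hV Vnz])
  have hM0: "(M has_vector_derivative (T t + (1 / c) *\<^sub>R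
     ((1 / norm ?V) *\<^sub>R cross3 (N t) (A t) - ((?V \<bullet> cross3 (N t) (A t)) / norm ?V ^ 3) *\<^sub>R ?V))) (at t)"
  proof -
    have "((\<lambda>x. (1 / c) *\<^sub>R ((1 / norm (cross3 (N x) (T x))) *\<^sub>R cross3 (N x) (T x))) has_vector_derivative
      (1 / c) *\<^sub>R ((1 / norm ?V) *\<^sub>R cross3 (N t) (A t) - ((?V \<bullet> cross3 (N t) (A t)) / norm ?V ^ 3) *\<^sub>R ?V)) (at t)"
      using has_vector_derivative_scaleR[OF DERIV_const hW, of "1/c"] by simp
    then show ?thesis unfolding M_def[abs_def]
      by (intro has_vector_derivative_add hg[OF t])
  qed
  define nT where "nT = norm (T t)"
  have nT: "nT > 0" using Tnz[OF t] nT_def by simp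
  have e1: "norm ?V = nT" using normNT[OF t] nT_def by simp
  have e2: "?V \<bullet> cross3 (N t) (A t) = T t \<bullet> A t"
    using binet[of "N t" "T t" "N t" "A t"] NT[OF t] Nunit[OF t] by (simp add: inner_commute dot_square_norm)
  have P: "(nT ^ 2) *\<^sub>R cross3 (N t) (A t) = (A t \<bullet> T t) *\<^sub>R ?V - (c * nT ^ 3) *\<^sub>R T t"
    using idP[of "T t" "N t" "A t"] NT[OF t] kgeq[OF t] nT_def by (simp add: dot_square_norm power2_eq_square)
  have "(1 / nT) *\<^sub>R cross3 (N t) (A t) = (1 / nT ^ 3) *\<^sub>R ((nT ^ 2) *\<^sub>R cross3 (N t) (A t))"
    using nT by (simp add: power3_eq_cube power2_eq_square)
  also have "\<dots> = ((A t \<bullet> T t) / nT ^ 3) *\<^sub>R ?V - c *\<^sub>R T t"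
    unfolding P using nT by (simp add: scaleR_diff_right power3_eq_cube)
  finally have R: "(1 / nT) *\<^sub>R cross3 (N t) (A t) = ((A t \<bullet> T t) / nT ^ 3) *\<^sub>R ?V - c *\<^sub>R T t" .
  have "T t + (1 / c) *\<^sub>R
     ((1 / norm ?V) *\<^sub>R cross3 (N t) (A t) - ((?V \<bullet> cross3 (N t) (A t)) / norm ?V ^ 3) *\<^sub>R ?V) = 0"
    unfolding e1 e2 R using c0 by (simp add: inner_commute)
  then show ?thesis using hM0 by simp
qed

lemma M_const: obtains m where "\<And>t. t \<in> I \<Longrightarrow> M t = m"
proof -
  have "\<And>t. t \<in> I \<Longrightarrow> (M has_vector_derivative 0) (at t within I)"
    using hM has_vector_derivative_at_within by blast
  then show ?thesis using has_vector_derivative_zero_constant[of I M] that by (metis convex_real_interval(8))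
qed

end


context LC begin

lemma sphere_part: obtains m where
  "\<And>t. t \<in> I \<Longrightarrow> dist (\<gamma> t) m = 1 / \<bar>c\<bar> \<and> N t \<bullet> (\<gamma> t - m) = 0"
proof -
  obtain m where m: "\<And>t. t \<in> I \<Longrightarrow> M t = m" using M_const by blast
  have "dist (\<gamma> t) m = 1 / \<bar>c\<bar> \<and> N t \<bullet> (\<gamma> t - m) = 0" if t: "t \<in> I" for t
  proof -
    let ?V = "cross3 (N t) (T t)"
    have Vnz: "norm ?V \<noteq> 0" using normNT[OF t] Tnz[OF t] by simp
    have d: "\<gamma> t - m = - ((1 / c) *\<^sub>R ((1 / norm ?V) *\<^sub>R ?V))"
      using m[OF t] unfolding M_def by (simp add: algebra_simps)
    have "dist (\<gamma> t) m = norm ((1 / c) *\<^sub>R ((1 / norm ?V) *\<^sub>R ?V))"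
      by (simp only: dist_norm d norm_minus_cancel)
    also have "\<dots> = 1 / \<bar>c\<bar>" using Vnz by (simp add: abs_mult)
    finally show ?thesis using d by (simp add: dot_cross_self)
  qed
  then show ?thesis using that by blast
qed

definition "Bn t = (1 / norm (cross3 (T t) (A t))) *\<^sub>R cross3 (T t) (A t)"

lemma hB: assumes t: "t \<in> I" shows "(Bn has_vector_derivative 0) (at t)"
proof -
  let ?B = "cross3 (T t) (A t)"
  let ?B' = "cross3 (T t) (J t)"
  have hB0: "((\<lambda>t. cross3 (T t) (A t)) has_vector_derivative ?B') (at t)"
    using vd_cross[OF hT[OF t] hA[OF t]] by simp
  have h: "(Bn has_vector_derivative
      ((1 / norm ?B) *\<^sub>R ?B' - ((?B \<bullet> ?B') / norm ?B ^ 3) *\<^sub>R ?B)) (at t)"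
    unfolding Bn_def[abs_def] by (rule vd_normalize[OF hB0 TAnz[OF t]])
  define nB where "nB = norm ?B"
  have nB: "nB > 0" using TAnz[OF t] nB_def by simp
  have Q: "(nB ^ 2) *\<^sub>R ?B' - (?B \<bullet> ?B') *\<^sub>R ?B = 0"
    using idQ[of "T t" "A t" "J t"] torsJ[OF t] nB_def by (simp add: dot_square_norm)
  have "(1 / nB) *\<^sub>R ?B' - ((?B \<bullet> ?B') / nB ^ 3) *\<^sub>R ?B
      = (1 / nB ^ 3) *\<^sub>R ((nB ^ 2) *\<^sub>R ?B' - (?B \<bullet> ?B') *\<^sub>R ?B)"
    using nB by (simp add: scaleR_diff_right power3_eq_cube power2_eq_square)
  also have "\<dots> = 0" unfolding Q by simp
  finally show ?thesis using h nB_def by simp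
qed

lemma B_const: obtains b0 where "\<And>t. t \<in> I \<Longrightarrow> Bn t = b0"
proof -
  have "\<And>t. t \<in> I \<Longrightarrow> (Bn has_vector_derivative 0) (at t within I)"
    using hB has_vector_derivative_at_within by blast
  then show ?thesis using has_vector_derivative_zero_constant[of I Bn] that by (metis convex_real_interval(8))
qed

lemma circle_part: "\<exists>m r n. r > 0 \<and> n \<noteq> 0 \<and>
            (\<forall>t\<in>I. dist (\<gamma> t) m = r \<and> (\<gamma> t - m) \<bullet> n = 0)"
proof -
  obtain m where m: "\<And>t. t \<in> I \<Longrightarrow> dist (\<gamma> t) m = 1 / \<bar>c\<bar> \<and> N t \<bullet> (\<gamma> t - m) = 0"
    using sphere_part by blast
  obtain b0 where b0: "\<And>t. t \<in> I \<Longrightarrow> Bn t = b0" using B_const by blast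
  define t0 where "t0 = (a + b) / 2"
  have t0: "t0 \<in> I" using ab t0_def by simp
  have b0e: "b0 = (1 / norm (cross3 (T t0) (A t0))) *\<^sub>R cross3 (T t0) (A t0)"
    using b0[OF t0] unfolding Bn_def by simp
  have b0u: "norm b0 = 1" unfolding b0e using TAnz[OF t0] by simp
  have Tb: "T t \<bullet> b0 = 0" if t: "t \<in> I" for t
    using b0[OF t] unfolding Bn_def[symmetric] by (auto simp: Bn_def dot_cross_self)
  have hphi: "((\<lambda>t. (\<gamma> t - \<gamma> t0) \<bullet> b0) has_vector_derivative 0) (at t within I)" if t: "t \<in> I" for t
  proof -
    have "((\<lambda>t. (\<gamma> t - \<gamma> t0) \<bullet> b0) has_vector_derivative (T t \<bullet> b0)) (at t)"
      using bounded_linear.has_vector_derivative[OF bounded_linear_inner_left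
          has_vector_derivative_diff[OF hg[OF t] has_vector_derivative_const]] by simp
    then show ?thesis using Tb[OF t] has_vector_derivative_at_within by fastforce
  qed
  obtain k where k: "\<And>t. t \<in> I \<Longrightarrow> (\<gamma> t - \<gamma> t0) \<bullet> b0 = k"
    using has_vector_derivative_zero_constant[of I "\<lambda>t. (\<gamma> t - \<gamma> t0) \<bullet> b0", OF _ hphi]
    by (metis convex_real_interval(8))
  have k0: "k = 0" using k[OF t0] by simp
  define d where "d = (m - \<gamma> t0) \<bullet> b0"
  define p where "p = m - d *\<^sub>R b0"
  have bb: "b0 \<bullet> b0 = 1" using b0u by (simp add: dot_square_norm)
  have plane: "(\<gamma> t - p) \<bullet> b0 = 0" if t: "t \<in> I" for t
  proof -
    have "(\<gamma> t - p) \<bullet> b0 = (\<gamma> t - \<gamma> t0) \<bullet> b0 - (m - \<gamma> t0) \<bullet> b0 + d * (b0 \<bullet> b0)"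
      unfolding p_def by (simp add: algebra_simps inner_diff_left)
    then show ?thesis using k[OF t] k0 bb d_def by simp
  qed
  have sq: "(dist (\<gamma> t) p)^2 = (1 / \<bar>c\<bar>)^2 - d^2" if t: "t \<in> I" for t
  proof -
    have gm: "(\<gamma> t - m) \<bullet> b0 = - d"
    proof -
      have "(\<gamma> t - m) \<bullet> b0 = (\<gamma> t - \<gamma> t0) \<bullet> b0 - (m - \<gamma> t0) \<bullet> b0"
        by (simp add: algebra_simps inner_diff_left)
      then show ?thesis using k[OF t] k0 d_def by simp
    qed
    have "(dist (\<gamma> t) p)^2 = (\<gamma> t - m + d *\<^sub>R b0) \<bullet> (\<gamma> t - m + d *\<^sub>R b0)"
      unfolding p_def dist_norm by (simp add: dot_square_norm algebra_simps)
    also have "\<dots> = (\<gamma> t - m) \<bullet> (\<gamma> t - m) + 2 * d * ((\<gamma> t - m) \<bullet> b0) + d * d * (b0 \<bullet> b0)"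
      by (simp add: inner_add_left inner_add_right inner_commute algebra_simps)
    also have "\<dots> = (dist (\<gamma> t) m)^2 - d^2"
      using gm bb by (simp add: dist_norm dot_square_norm power2_eq_square)
    finally show ?thesis using m[OF t] by simp
  qed
  define r where "r = dist (\<gamma> t0) p"
  have dr: "dist (\<gamma> t) p = r" if t: "t \<in> I" for t
  proof -
    have "(dist (\<gamma> t) p)^2 = r^2" using sq[OF t] sq[OF t0] r_def by simp
    then show ?thesis using r_def by (simp add: power2_eq_iff_nonneg)
  qed
  have rpos: "r > 0"
  proof (rule ccontr)
    assume "\<not> r > 0"
    then have "r = 0" using r_def by simp
    then have gp: "\<And>t. t \<in> I \<Longrightarrow> \<gamma> t = p" using dr by simp
    have "((\<lambda>_. p) has_vector_derivative 0) (at t0)" by simp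
    then have "(\<gamma> has_vector_derivative 0) (at t0)"
      by (rule has_vector_derivative_transform_within_open[OF _ oI t0]) (metis gp)
    then have "T t0 = 0" using hg[OF t0] vector_derivative_unique_at by blast
    then show False using Tnz[OF t0] by simp
  qed
  have "b0 \<noteq> 0" using b0u by auto
  then show ?thesis using rpos dr plane by blast
qed

end

theorem lemma3p2:
  fixes X :: "real^2 \<Rightarrow> real^3" and U :: "(real^2) set"
    and \<alpha> :: "real \<Rightarrow> real^2" and a b c :: real
  assumes surf: "regular_surface X U"
    and ab: "a < b"
    and curve_smooth: "smooth_on {a<..<b} \<alpha>"
    and curve_in: "\<alpha> ` {a<..<b} \<subseteq> U"
    and regular: "\<forall>t\<in>{a<..<b}. D1 (X \<circ> \<alpha>) t \<noteq> 0"
    and loc: "line_of_curvature X \<alpha> {a<..<b}"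
    and kg: "\<forall>t\<in>{a<..<b}. geodesic_curvature X \<alpha> t = c"
    and c0: "c \<noteq> 0"
    and tors: "\<forall>t\<in>{a<..<b}. torsion (X \<circ> \<alpha>) t = 0"
  shows "(\<exists>m r n. r > 0 \<and> n \<noteq> 0 \<and>
            (\<forall>t\<in>{a<..<b}. dist ((X \<circ> \<alpha>) t) m = r \<and> ((X \<circ> \<alpha>) t - m) \<bullet> n = 0))
       \<and> (\<exists>m. \<forall>t\<in>{a<..<b}. dist ((X \<circ> \<alpha>) t) m = 1 / \<bar>c\<bar>
                \<and> unit_normal X (\<alpha> t) \<bullet> ((X \<circ> \<alpha>) t - m) = 0)"
proof -
  interpret LC X U \<alpha> a b c using assms by unfold_locales
  show ?thesis using circle_part sphere_part by metis
qed


end
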